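(* Let $n\ge 1$ and $m$ be integers with $n-|m|$ even and non-negative, let $R_n^{|m|}(r)=r^{|m|}\,P^{(0,|m|)}_{\frac{n-|m|}{2}}(2r^2-1)$ for $0\le r\le1$, and let $k\ge1$ be an integer. Put \[ B_{n,k}=\frac{n^2(n^2-1^2)\cdots(n^2-(k-1)^2)}{2^k\,(1/2)_k},\qquad a_n=2\Bigl(\tfrac12\Bigr)^n\binom{n}{\frac{n-|m|}{2}}. \] Then $\max_{0\le r\le1}|(R_n^{|m|})^{(k)}(r)|$ is attained at $r=1$, and \[ a_n\,B_{n,k}\;\le\;(R_n^{|m|})^{(k)}(1)\;\le\;B_{n,k}. \]
   Context: $P_p^{(\alpha,\beta)}$ denotes the Jacobi polynomial of degree $p$ orthogonal with respect to the weight $(1-x)^\alpha(1+x)^\beta$ on $[-1,1]$, with standard normalization $P_p^{(\alpha,\beta)}(1)=\binom{p+\alpha}{p}$. $f^{(k)}$ denotes the $k$-th derivative. $(\alpha)_k=\alpha(\alpha+1)\cdots(\alpha+k-1)$ is the Pochhammer symbol, $(\alpha)_0=1$. *)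

theory Defs
  imports "HOL-Analysis.Analysis"
begin

text \<open>Jacobi polynomial P_p^(alpha,beta)(x), standard normalisation
  P_p^(alpha,beta)(1) = binom(p+alpha, p), via the classical explicit formula
  P_p^(a,b)(x) = sum_{s=0}^p binom(p+a, p-s) binom(p+b, s) ((x-1)/2)^s ((x+1)/2)^(p-s).\<close>
definition jacobiP :: "nat \<Rightarrow> real \<Rightarrow> real \<Rightarrow> real \<Rightarrow> real" where
  "jacobiP p \<alpha> \<beta> x =
     (\<Sum>s\<le>p. ((real p + \<alpha>) gchoose (p - s)) * ((real p + \<beta>) gchoose s)
              * ((x - 1) / 2) ^ s * ((x + 1) / 2) ^ (p - s))"

definition zernikeR :: "nat \<Rightarrow> int \<Rightarrow> real \<Rightarrow> real" where
  "zernikeR n m r = r ^ nat \<bar>m\<bar> *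
     jacobiP (nat ((int n - \<bar>m\<bar>) div 2)) 0 (real (nat \<bar>m\<bar>)) (2 * r\<^sup>2 - 1)"

definition B_const :: "nat \<Rightarrow> nat \<Rightarrow> real" where
  "B_const n k = (\<Prod>j<k. (real n)\<^sup>2 - (real j)\<^sup>2) / (2 ^ k * pochhammer (1/2) k)"

definition a_const :: "nat \<Rightarrow> int \<Rightarrow> real" where
  "a_const n m = 2 * (1/2) ^ n * real (n choose nat ((int n - \<bar>m\<bar>) div 2))"

end

theory Submission
  imports Defs "HOL-Computational_Algebra.Polynomial"
begin


fun Tc :: "nat \<Rightarrow> real poly" where
  "Tc 0 = 1"
| "Tc (Suc 0) = [:0,1:]"
| "Tc (Suc (Suc j)) = [:0,2:] * Tc (Suc j) - Tc j"

fun Uc :: "nat \<Rightarrow> real poly" where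
  "Uc 0 = 1"
| "Uc (Suc 0) = [:0,2:]"
| "Uc (Suc (Suc j)) = [:0,2:] * Uc (Suc j) - Uc j"

lemma Trec: "poly (Tc (Suc (Suc j))) x = 2*x*poly (Tc (Suc j)) x - poly (Tc j) x" by simp
lemma Urec: "poly (Uc (Suc (Suc j))) x = 2*x*poly (Uc (Suc j)) x - poly (Uc j) x" by simp
lemma T0: "poly (Tc 0) x = 1" by simp
lemma T1: "poly (Tc (Suc 0)) x = x" by simp
lemma U0: "poly (Uc 0) x = 1" by simp
lemma U1: "poly (Uc (Suc 0)) x = 2*x" by simp
lemma T2: "poly (Tc (Suc (Suc 0))) x = 2*x*x - 1" by (simp add: algebra_simps)
lemma T3: "poly (Tc (Suc (Suc (Suc 0)))) x = 4*x*x*x - 3*x" by (simp add: algebra_simps)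
lemma U2: "poly (Uc (Suc (Suc 0))) x = 4*x*x - 1" by (simp add: algebra_simps)
lemma U3: "poly (Uc (Suc (Suc (Suc 0)))) x = 8*x*x*x - 4*x" by (simp add: algebra_simps)
declare Tc.simps(3)[simp del] Uc.simps(3)[simp del]

lemma I5p: "poly (Tc (Suc (Suc j))) x = x * poly (Uc (Suc j)) x - poly (Uc j) x
   \<and> poly (Tc (Suc (Suc (Suc j)))) x = x * poly (Uc (Suc (Suc j))) x - poly (Uc (Suc j)) x"
proof (induction j)
  case 0 then show ?case by (simp add: T2 T3 U2 U3 algebra_simps power2_eq_square)
next
  case (Suc j)
  have h1: "poly (Tc (Suc (Suc (Suc j)))) x = x * poly (Uc (Suc (Suc j))) x - poly (Uc (Suc j)) x"
    using Suc.IH by (rule conjunct2)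
  have h0: "poly (Tc (Suc (Suc j))) x = x * poly (Uc (Suc j)) x - poly (Uc j) x" using Suc.IH by (rule conjunct1)
  have h2: "poly (Tc (Suc (Suc (Suc (Suc j))))) x = x * poly (Uc (Suc (Suc (Suc j)))) x - poly (Uc (Suc (Suc j))) x"
    unfolding Trec[of "Suc (Suc j)" x] h1 h0 by (simp add: Urec[of "Suc j" x] Urec[of j x] algebra_simps)
  show ?case by (rule conjI[OF h1 h2])
qed

lemma poly_ext:
  fixes p q :: "real poly"
  assumes "\<And>x. poly p x = poly q x" shows "p = q"
proof -
  have "poly p = poly q" by (rule ext) (rule assms)
  then show ?thesis by (simp only: poly_eq_poly_eq_iff)
qed

lemma I5: "Tc (Suc (Suc j)) = [:0,1:] * Uc (Suc j) - Uc j"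
  using I5p[of j] by (intro poly_ext) simp

lemma I1: "Uc (Suc (Suc j)) = Uc j + smult 2 (Tc (Suc (Suc j)))"
proof (rule poly_ext)
  fix x show "poly (Uc (Suc (Suc j))) x = poly (Uc j + smult 2 (Tc (Suc (Suc j)))) x"
    using I5p[of j x] Urec[of j x] by (simp add: algebra_simps)
qed

lemma I3p: "(1 - x^2) * poly (Uc j) x = poly (Tc j) x - x * poly (Tc (Suc j)) x
   \<and> (1 - x^2) * poly (Uc (Suc j)) x = poly (Tc (Suc j)) x - x * poly (Tc (Suc (Suc j))) x"
proof (induction j)
  case 0 then show ?case by (simp add: T2 T3 U2 U3 algebra_simps power2_eq_square)
next
  case (Suc j)
  have h1: "(1 - x^2) * poly (Uc (Suc j)) x = poly (Tc (Suc j)) x - x * poly (Tc (Suc (Suc j))) x"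
    using Suc.IH by (rule conjunct2)
  have h0: "(1 - x^2) * poly (Uc j) x = poly (Tc j) x - x * poly (Tc (Suc j)) x" using Suc.IH by (rule conjunct1)
  have "(1 - x^2) * poly (Uc (Suc (Suc j))) x = 2*x*((1 - x^2) * poly (Uc (Suc j)) x) - (1 - x^2) * poly (Uc j) x"
    unfolding Urec by (simp add: algebra_simps)
  also have "\<dots> = poly (Tc (Suc (Suc j))) x - x * poly (Tc (Suc (Suc (Suc j)))) x"
    unfolding h1 h0 Trec[of "Suc j" x] Trec[of j x] by (simp add: algebra_simps)
  finally have h2: "(1 - x^2) * poly (Uc (Suc (Suc j))) x = poly (Tc (Suc (Suc j))) x - x * poly (Tc (Suc (Suc (Suc j)))) x" .
  show ?case by (rule conjI[OF h1 h2])
qed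

lemma I3: "[:1,0,-1:] * Uc j = Tc j - [:0,1:] * Tc (Suc j)"
  by (rule poly_ext) (use I3p[of _ j] in \<open>simp add: algebra_simps power2_eq_square\<close>)

lemma pd2: "pderiv ([:0,2:] * (p::real poly)) = [:0,2:] * pderiv p + smult 2 p"
  by (simp add: pderiv_mult pderiv_pCons pderiv_smult)
lemma pderiv_Trec: "pderiv (Tc (Suc (Suc j))) = [:0,2:] * pderiv (Tc (Suc j)) + smult 2 (Tc (Suc j)) - pderiv (Tc j)"
  by (simp only: Tc.simps(3) pderiv_diff pd2)
lemma pderiv_Urec: "pderiv (Uc (Suc (Suc j))) = [:0,2:] * pderiv (Uc (Suc j)) + smult 2 (Uc (Suc j)) - pderiv (Uc j)"
  by (simp only: Uc.simps(3) pderiv_diff pd2)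

lemma I2p: "pderiv (Tc (Suc j)) = smult (of_nat (Suc j)) (Uc j) \<and> pderiv (Tc (Suc (Suc j))) = smult (of_nat (Suc (Suc j))) (Uc (Suc j))"
proof (induction j)
  case 0
  have a: "pderiv (Tc (Suc 0)) = smult (of_nat (Suc 0)) (Uc 0)" by (simp add: pderiv_pCons)
  have b: "pderiv (Tc (Suc (Suc 0))) = smult (of_nat (Suc (Suc 0))) (Uc (Suc 0))"
    by (simp add: Tc.simps(3) pderiv_diff pderiv_mult pderiv_pCons)
  show ?case by (rule conjI[OF a b])
next
  case (Suc j)
  have i1: "pderiv (Tc (Suc j)) = smult (of_nat (Suc j)) (Uc j)" using Suc.IH by (rule conjunct1)
  have i2: "pderiv (Tc (Suc (Suc j))) = smult (of_nat (Suc (Suc j))) (Uc (Suc j))" using Suc.IH by (rule conjunct2)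
  have i3: "pderiv (Tc (Suc (Suc (Suc j)))) = smult (of_nat (Suc (Suc (Suc j)))) (Uc (Suc (Suc j)))"
  proof (rule poly_ext)
    fix x
    have a: "poly (Tc (Suc (Suc j))) x = x * poly (Uc (Suc j)) x - poly (Uc j) x" using I5p[of j x] by (rule conjunct1)
    have "poly (pderiv (Tc (Suc (Suc (Suc j))))) x = 2*x*poly (pderiv (Tc (Suc (Suc j)))) x + 2 * poly (Tc (Suc (Suc j))) x - poly (pderiv (Tc (Suc j))) x"
      unfolding pderiv_Trec[of "Suc j"] by simp
    also have "\<dots> = 2*x*((real j+2) * poly (Uc (Suc j)) x) + 2 * (x * poly (Uc (Suc j)) x - poly (Uc j) x) - (real j + 1) * poly (Uc j) x"
      unfolding i1 i2 a by (simp add: algebra_simps)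
    also have "\<dots> = poly (smult (of_nat (Suc (Suc (Suc j)))) (Uc (Suc (Suc j)))) x"
      unfolding poly_smult Urec[of j x] by (simp add: algebra_simps)
    finally show "poly (pderiv (Tc (Suc (Suc (Suc j))))) x = poly (smult (of_nat (Suc (Suc (Suc j)))) (Uc (Suc (Suc j)))) x" .
  qed
  show ?case by (rule conjI[OF i2 i3])
qed

lemma I2: "pderiv (Tc (Suc j)) = smult (of_nat (Suc j)) (Uc j)"
  using I2p by blast

lemma I4p: "(1 - x^2) * poly (pderiv (Uc j)) x = x * poly (Uc j) x - (j+1) * poly (Tc (Suc j)) x
  \<and> (1 - x^2) * poly (pderiv (Uc (Suc j))) x = x * poly (Uc (Suc j)) x - (j+2) * poly (Tc (Suc (Suc j))) x"
proof (induction j)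
  case 0
  show ?case using Trec[of 0 x] by (simp add: Uc.simps(3) pderiv_pCons algebra_simps power2_eq_square)
next
  case (Suc j)
  have d: "poly (pderiv (Uc (Suc (Suc j)))) x = 2 * x * poly (pderiv (Uc (Suc j))) x + 2 * poly (Uc (Suc j)) x - poly (pderiv (Uc j)) x"
    unfolding pderiv_Urec[of j] by simp
  have e: "(1 - x^2) * poly (pderiv (Uc (Suc (Suc j)))) x = x * poly (Uc (Suc (Suc j))) x - (real j+3) * poly (Tc (Suc (Suc (Suc j)))) x"
  proof -
    have h0: "(1 - x^2) * poly (pderiv (Uc j)) x = x * poly (Uc j) x - (real j+1) * poly (Tc (Suc j)) x"
      using Suc.IH by simp
    have h1: "(1 - x^2) * poly (pderiv (Uc (Suc j))) x = x * poly (Uc (Suc j)) x - (real j+2) * poly (Tc (Suc (Suc j))) x"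
      using Suc.IH by simp
    have h3: "(1 - x^2) * poly (Uc (Suc j)) x = poly (Tc (Suc j)) x - x * poly (Tc (Suc (Suc j))) x"
      using I3p[of x j] by blast
    have "(1 - x^2) * poly (pderiv (Uc (Suc (Suc j)))) x = 2 * x * ((1 - x^2) * poly (pderiv (Uc (Suc j))) x)
       + 2 * ((1 - x^2) * poly (Uc (Suc j)) x) - (1 - x^2) * poly (pderiv (Uc j)) x"
      unfolding d by (simp add: algebra_simps)
    also have "\<dots> = 2 * x * (x * poly (Uc (Suc j)) x - (real j+2) * poly (Tc (Suc (Suc j))) x)
       + 2 * (poly (Tc (Suc j)) x - x * poly (Tc (Suc (Suc j))) x) - (x * poly (Uc j) x - (real j+1) * poly (Tc (Suc j)) x)"
      unfolding h0 h1 h3 ..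
    also have "\<dots> = x * poly (Uc (Suc (Suc j))) x - (real j+3) * poly (Tc (Suc (Suc (Suc j)))) x"
      unfolding Urec[of j x] Trec[of "Suc j" x] by (simp add: algebra_simps)
    finally show ?thesis .
  qed
  have eq1: "real (Suc j) + 1 = real j + 2" by simp
  have c1: "(1 - x^2) * poly (pderiv (Uc (Suc j))) x = x * poly (Uc (Suc j)) x - (real (Suc j)+1) * poly (Tc (Suc (Suc j))) x"
    unfolding eq1 using Suc.IH by blast
  have eq2: "real (Suc j) + 2 = real j + 3" by simp
  have c2: "(1 - x^2) * poly (pderiv (Uc (Suc (Suc j)))) x = x * poly (Uc (Suc (Suc j))) x - (real (Suc j)+2) * poly (Tc (Suc (Suc (Suc j)))) x"
    unfolding eq2 by (rule e)
  show ?case by (rule conjI[OF c1 c2])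
qed

lemma ode_aux0: "poly (A * smult c P - B * smult c Q + smult (c^2) R) x
   = c * (poly A x*poly P x - poly B x*poly Q x + c*poly R x)" for x :: real
  by (simp add: poly_diff algebra_simps power2_eq_square)
lemma ode_aux: "poly ([:1,0,-1:] * smult c P - [:0,1:] * smult c Q + smult (c^2) R) x
   = c * ((1-x^2)*poly P x - x*poly Q x + c*poly R x)" for x :: real
  unfolding ode_aux0 by (simp add: power2_eq_square)

lemma ODE0: "[:1,0,-1:] * (pderiv (pderiv (Tc j))) - [:0,1:] * pderiv (Tc j) + smult (of_nat j ^ 2) (Tc j) = 0"
proof (cases j)
  case 0 then show ?thesis by simp
next
  case (Suc i)
  show ?thesis
  proof (rule poly_ext)
    fix x
    have h: "(1 - x^2) * poly (pderiv (Uc i)) x = x * poly (Uc i) x - (real i+1) * poly (Tc (Suc i)) x"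
      using I4p[of x i] by blast
    show "poly ([:1,0,-1:] * (pderiv (pderiv (Tc j))) - [:0,1:] * pderiv (Tc j) + smult (of_nat j ^ 2) (Tc j)) x = poly 0 x"
      unfolding Suc I2 pderiv_smult ode_aux h by simp
  qed
qed


inductive ccone :: "real poly \<Rightarrow> bool" where
  cone_0: "ccone 0"
| cone_T: "ccone (Tc i)"
| cone_add: "ccone p \<Longrightarrow> ccone q \<Longrightarrow> ccone (p + q)"
| cone_smult: "c \<ge> 0 \<Longrightarrow> ccone p \<Longrightarrow> ccone (smult c p)"

lemma cone_sum: "finite A \<Longrightarrow> (\<And>a. a \<in> A \<Longrightarrow> ccone (f a)) \<Longrightarrow> ccone (sum f A)"
  by (induction A rule: finite_induct) (auto intro: ccone.intros)

lemma Tc_cos: "poly (Tc j) (cos t) = cos (real j * t) \<and> poly (Tc (Suc j)) (cos t) = cos (real (Suc j) * t)"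
proof (induction j)
  case 0 show ?case by simp
next
  case (Suc j)
  have h0: "poly (Tc j) (cos t) = cos (real j * t)" using Suc.IH by (rule conjunct1)
  have h1: "poly (Tc (Suc j)) (cos t) = cos (real (Suc j) * t)" using Suc.IH by (rule conjunct2)
  have "cos (real (Suc (Suc j)) * t) = 2 * cos t * cos (real (Suc j) * t) - cos (real j * t)"
  proof -
    have a: "real (Suc (Suc j)) * t = real (Suc j) * t + t" by (simp add: algebra_simps)
    have b: "real j * t = real (Suc j) * t - t" by (simp add: algebra_simps)
    show ?thesis unfolding a b cos_add cos_diff by (simp add: algebra_simps)
  qed
  then have h2: "poly (Tc (Suc (Suc j))) (cos t) = cos (real (Suc (Suc j)) * t)"
    unfolding Trec h0 h1 by simp
  show ?case by (rule conjI[OF h1 h2])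
qed

lemma Tc_bound: assumes "\<bar>x\<bar> \<le> 1" shows "\<bar>poly (Tc j) x\<bar> \<le> 1"
proof -
  have "x = cos (arccos x)" using assms by (simp add: cos_arccos)
  then have "poly (Tc j) x = cos (real j * arccos x)" using Tc_cos[of j "arccos x"] by simp
  then show ?thesis by simp
qed

lemma Tc_one: "poly (Tc j) 1 = 1"
  using Tc_cos[of j 0] by simp

lemma cone_bound: "ccone p \<Longrightarrow> \<bar>x\<bar> \<le> 1 \<Longrightarrow> \<bar>poly p x\<bar> \<le> poly p 1"
proof (induction p rule: ccone.induct)
  case cone_0 then show ?case by simp
next
  case (cone_T i) then show ?case using Tc_bound[of x i] Tc_one[of i] by simp
next
  case (cone_add p q)
  have "\<bar>poly (p + q) x\<bar> \<le> \<bar>poly p x\<bar> + \<bar>poly q x\<bar>" by (simp add: abs_triangle_ineq)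
  then show ?case using cone_add by simp
next
  case (cone_smult c p)
  have "\<bar>poly (smult c p) x\<bar> = c * \<bar>poly p x\<bar>" using cone_smult(1) by (simp add: abs_mult)
  also have "\<dots> \<le> c * poly p 1" using cone_smult by (intro mult_left_mono) auto
  finally show ?case by simp
qed

lemma cone_nonneg1: "ccone p \<Longrightarrow> poly p 1 \<ge> 0"
  using cone_bound[of p 1] by simp

lemma Uc_cone: "ccone (Uc j) \<and> ccone (Uc (Suc j))"
proof (induction j)
  case 0
  have a: "ccone (Uc 0)" using cone_T[of 0] by simp
  have b: "ccone (Uc (Suc 0))" using cone_smult[of 2 "Tc 1", OF _ cone_T] by (simp add: numeral_eq_Suc)
  show ?case by (rule conjI[OF a b])
next
  case (Suc j)
  have a: "ccone (Uc (Suc j))" using Suc.IH by (rule conjunct2)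
  have b: "ccone (Uc (Suc (Suc j)))" unfolding I1
    using Suc.IH by (intro cone_add cone_smult cone_T) auto
  show ?case by (rule conjI[OF a b])
qed

lemma cone_pderiv_Tc: "ccone (pderiv (Tc j))"
proof (cases j)
  case 0 then show ?thesis by (simp add: cone_0)
next
  case (Suc i) then show ?thesis unfolding Suc I2 using Uc_cone[of i] by (intro cone_smult) auto
qed

lemma cone_pderiv: "ccone p \<Longrightarrow> ccone (pderiv p)"
  by (induction p rule: ccone.induct) (auto simp: pderiv_add pderiv_smult cone_pderiv_Tc intro: ccone.intros)

lemma cone_hpderiv: "ccone p \<Longrightarrow> ccone ((pderiv ^^ k) p)"
  by (induction k) (auto simp: cone_pderiv)

lemma Tdiff: "\<exists>D. ccone D \<and> pderiv (Tc (Suc (Suc j))) = pderiv (Tc j) + D"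
proof (cases j)
  case 0
  have "pderiv (Tc (Suc (Suc 0))) = pderiv (Tc 0) + smult 2 (Uc (Suc 0))" unfolding I2 by simp
  moreover have "ccone (smult 2 (Uc (Suc 0)))" using Uc_cone[of 0] by (intro cone_smult) auto
  ultimately show ?thesis using 0 by blast
next
  case (Suc i)
  have "pderiv (Tc (Suc (Suc j))) = pderiv (Tc j) + (smult 2 (Uc i) + smult (2 * (real i + 3)) (Tc (Suc (Suc i))))"
    unfolding Suc I2 I1[of i] by (rule poly_ext) (simp add: algebra_simps)
  moreover have "ccone (smult 2 (Uc i) + smult (2 * (real i + 3)) (Tc (Suc (Suc i))))"
    using Uc_cone[of i] by (intro cone_add cone_smult cone_T) auto
  ultimately show ?thesis by blast
qed

lemma hpderiv_Suc_right: "(pderiv ^^ Suc k) p = (pderiv ^^ k) (pderiv p)"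
  by (simp add: funpow_Suc_right del: funpow.simps)

lemma tval_mono_step:
  assumes "k \<ge> 1"
  shows "poly ((pderiv ^^ k) (Tc j)) 1 \<le> poly ((pderiv ^^ k) (Tc (Suc (Suc j)))) 1"
proof -
  obtain D where D: "ccone D" "pderiv (Tc (Suc (Suc j))) = pderiv (Tc j) + D" using Tdiff by blast
  obtain k' where k: "k = Suc k'" using assms by (cases k) auto
  have "(pderiv ^^ k) (Tc (Suc (Suc j))) = (pderiv ^^ k) (Tc j) + (pderiv ^^ k') D"
    unfolding k hpderiv_Suc_right D(2) higher_pderiv_add ..
  moreover have "poly ((pderiv ^^ k') D) 1 \<ge> 0" using cone_nonneg1[OF cone_hpderiv[OF D(1)]] .
  ultimately show ?thesis by simp
qed

lemma tval_mono:
  assumes "k \<ge> 1"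
  shows "poly ((pderiv ^^ k) (Tc j)) 1 \<le> poly ((pderiv ^^ k) (Tc (j + 2 * d))) 1"
proof (induction d)
  case 0 then show ?case by simp
next
  case (Suc d)
  have "j + 2 * Suc d = Suc (Suc (j + 2 * d))" by simp
  then show ?case using Suc tval_mono_step[OF assms, of "j + 2 * d"] by simp
qed

lemma pA: "pderiv ([:1,0,-1:] * A) = [:1,0,-1:] * pderiv A + [:0,-2:] * (A :: real poly)"
proof -
  have "pderiv [:1,0,-1::real:] = [:0,-2:]" by (simp add: pderiv_pCons)
  then show ?thesis unfolding pderiv_mult by (simp add: mult.commute)
qed
lemma pB: "pderiv ([:0,1:] * A) = A + [:0,1:] * pderiv (A :: real poly)"
proof -
  have "pderiv [:0,1::real:] = 1" by (simp add: pderiv_pCons)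
  then show ?thesis unfolding pderiv_mult by (simp add: add.commute)
qed

lemma ODE_k:
  "[:1,0,-1:] * (pderiv ^^ (Suc (Suc k))) (Tc j) - smult (2 * real k + 1) ([:0,1:] * (pderiv ^^ (Suc k)) (Tc j))
     + smult (real j ^ 2 - real k ^ 2) ((pderiv ^^ k) (Tc j)) = 0"
proof (induction k)
  case 0
  show ?case using ODE0[of j] by simp
next
  case (Suc k)
  define d where "d = (\<lambda>i. (pderiv ^^ i) (Tc j))"
  have dS: "pderiv (d i) = d (Suc i)" for i unfolding d_def by simp
  have IH: "[:1,0,-1:] * d (Suc (Suc k)) - smult (2 * real k + 1) ([:0,1:] * d (Suc k)) + smult (real j ^ 2 - real k ^ 2) (d k) = 0"
    using Suc.IH unfolding d_def .
  have "pderiv ([:1,0,-1:] * d (Suc (Suc k)) - smult (2 * real k + 1) ([:0,1:] * d (Suc k)) + smult (real j ^ 2 - real k ^ 2) (d k)) = 0"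
    unfolding IH by simp
  then have E: "[:1,0,-1:] * d (Suc (Suc (Suc k))) + [:0,-2:] * d (Suc (Suc k)) - smult (2 * real k + 1) (d (Suc k) + [:0,1:] * d (Suc (Suc k))) + smult (real j ^ 2 - real k ^ 2) (d (Suc k)) = 0"
    by (simp only: pderiv_add pderiv_diff pderiv_smult pA pB dS)
  have "[:1,0,-1:] * d (Suc (Suc (Suc k))) - smult (2 * real (Suc k) + 1) ([:0,1:] * d (Suc (Suc k))) + smult (real j ^ 2 - real (Suc k) ^ 2) (d (Suc k))
     = [:1,0,-1:] * d (Suc (Suc (Suc k))) + [:0,-2:] * d (Suc (Suc k)) - smult (2 * real k + 1) (d (Suc k) + [:0,1:] * d (Suc (Suc k))) + smult (real j ^ 2 - real k ^ 2) (d (Suc k))"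
  proof (rule poly_ext)
    fix x
    show "poly ([:1,0,-1:] * d (Suc (Suc (Suc k))) - smult (2 * real (Suc k) + 1) ([:0,1:] * d (Suc (Suc k))) + smult (real j ^ 2 - real (Suc k) ^ 2) (d (Suc k))) x
       = poly ([:1,0,-1:] * d (Suc (Suc (Suc k))) + [:0,-2:] * d (Suc (Suc k)) - smult (2 * real k + 1) (d (Suc k) + [:0,1:] * d (Suc (Suc k))) + smult (real j ^ 2 - real k ^ 2) (d (Suc k))) x"
      by (simp add: algebra_simps power2_eq_square)
  qed
  with E show ?case unfolding d_def by simp
qed

lemma tval_rec: "poly ((pderiv ^^ Suc k) (Tc j)) 1 = (real j ^ 2 - real k ^ 2) / (2 * real k + 1) * poly ((pderiv ^^ k) (Tc j)) 1"
proof -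
  have "poly ([:1,0,-1:] * (pderiv ^^ (Suc (Suc k))) (Tc j) - smult (2 * real k + 1) ([:0,1:] * (pderiv ^^ (Suc k)) (Tc j))
     + smult (real j ^ 2 - real k ^ 2) ((pderiv ^^ k) (Tc j))) 1 = 0"
    unfolding ODE_k by simp
  then have "(2 * real k + 1) * poly ((pderiv ^^ Suc k) (Tc j)) 1 = (real j ^ 2 - real k ^ 2) * poly ((pderiv ^^ k) (Tc j)) 1"
    by simp
  moreover have "2 * real k + 1 > 0" by simp
  ultimately show ?thesis by (simp add: field_simps)
qed

lemma tval_formula: "poly ((pderiv ^^ k) (Tc j)) 1 = (\<Prod>i<k. (real j ^ 2 - real i ^ 2) / (2 * real i + 1))"
proof (induction k)
  case 0 then show ?case by (simp add: Tc_one)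
next
  case (Suc k) show ?case unfolding tval_rec[of k j] Suc.IH prod.lessThan_Suc by (simp add: mult.commute)
qed

lemma B_const_formula: "B_const n k = (\<Prod>i<k. (real n ^ 2 - real i ^ 2) / (2 * real i + 1))"
proof (induction k)
  case 0 then show ?case by (simp add: B_const_def)
next
  case (Suc k)
  have "B_const n (Suc k) = B_const n k * ((real n ^ 2 - real k ^ 2) / (2 * (1/2 + real k)))"
    unfolding B_const_def by (simp add: pochhammer_Suc field_simps)
  also have "2 * (1/2 + real k) = 2 * real k + 1" by simp
  finally show ?case using Suc by simp
qed



lemma coeff_lin_pow: "coeff ([:a,b:] ^ N) i = of_nat (N choose i) * b ^ i * a ^ (N - i)"
  for a b :: real
proof (cases "i \<le> N")
  case True then show ?thesis by (rule coeff_linear_poly_power)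
next
  case False
  have "degree ([:a,b:] ^ N) \<le> degree [:a,b:] * N" by (rule degree_power_le)
  also have "\<dots> \<le> N" by simp
  finally have "coeff ([:a,b:] ^ N) i = 0" using False by (intro coeff_eq_0) simp
  then show ?thesis using False by simp
qed

definition hom :: "nat \<Rightarrow> real poly \<Rightarrow> real poly \<Rightarrow> real poly \<Rightarrow> real poly" where
  "hom d E X Y = (\<Sum>k\<le>d. smult (coeff E k) (X ^ k * Y ^ (d - k)))"

lemma hom_lin:
  assumes "degree E \<le> d"
  shows "hom (Suc d) ([:c,1:] * E) X Y = (X + smult c Y) * hom d E X Y"
proof -
  have split: "[:c,1:] * E = smult c E + pCons 0 E" by simp
  have a: "hom (Suc d) (smult c E) X Y = smult c Y * hom d E X Y"
  proof -
    have "hom (Suc d) (smult c E) X Y = (\<Sum>k\<le>Suc d. smult (c * coeff E k) (X ^ k * Y ^ (Suc d - k)))"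
      unfolding hom_def by simp
    also have "\<dots> = (\<Sum>k\<le>d. smult (c * coeff E k) (X ^ k * Y ^ (Suc d - k)))"
      using assms by (simp add: coeff_eq_0)
    also have "\<dots> = (\<Sum>k\<le>d. smult c Y * smult (coeff E k) (X ^ k * Y ^ (d - k)))"
    proof (rule sum.cong[OF refl])
      fix k assume "k \<in> {..d}"
      then have "Suc d - k = Suc (d - k)" by auto
      then show "smult (c * coeff E k) (X ^ k * Y ^ (Suc d - k)) = smult c Y * smult (coeff E k) (X ^ k * Y ^ (d - k))"
        by (simp add: algebra_simps)
    qed
    also have "\<dots> = smult c Y * hom d E X Y" unfolding hom_def by (simp add: sum_distrib_left)
    finally show ?thesis .
  qed
  have b: "hom (Suc d) (pCons 0 E) X Y = X * hom d E X Y"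
  proof -
    have "hom (Suc d) (pCons 0 E) X Y = (\<Sum>k\<le>Suc d. smult (coeff (pCons 0 E) k) (X ^ k * Y ^ (Suc d - k)))"
      unfolding hom_def ..
    also have "\<dots> = (\<Sum>k\<le>d. smult (coeff E k) (X ^ Suc k * Y ^ (d - k)))"
      by (subst sum.atMost_Suc_shift) simp
    also have "\<dots> = X * hom d E X Y" unfolding hom_def by (simp add: sum_distrib_left algebra_simps)
    finally show ?thesis .
  qed
  have lin: "hom d (P + Q) X Y = hom d P X Y + hom d Q X Y" for d P Q
    unfolding hom_def by (simp add: smult_add_left sum.distrib)
  show ?thesis unfolding split lin a b by (simp add: algebra_simps)
qed

lemma hom_pow0: "hom b ([:-1,1:] ^ b) X Y = (X - Y) ^ b"
proof (induction b)
  case 0 then show ?case by (simp add: hom_def)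
next
  case (Suc b)
  have "degree ([:-1,1::real:] ^ b) \<le> b"
    using degree_power_le[of "[:-1,1::real:]" b] by simp
  then have "hom (Suc b) ([:-1,1:] * [:-1,1:] ^ b) X Y = (X + smult (-1) Y) * hom b ([:-1,1:] ^ b) X Y"
    by (rule hom_lin)
  then show ?case using Suc by simp
qed

lemma hom_pow: "hom (a + b) ([:1,1:] ^ a * [:-1,1:] ^ b) X Y = (X + Y) ^ a * (X - Y) ^ b"
proof (induction a)
  case 0 then show ?case using hom_pow0 by simp
next
  case (Suc a)
  have "degree ([:1,1::real:] ^ a * [:-1,1:] ^ b) \<le> degree ([:1,1::real:] ^ a) + degree ([:-1,1::real:] ^ b)"
    by (rule degree_mult_le)
  also have "\<dots> \<le> a + b" using degree_power_le[of "[:1,1::real:]" a] degree_power_le[of "[:-1,1::real:]" b]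
    by simp
  finally have "hom (Suc (a + b)) ([:1,1:] * ([:1,1:] ^ a * [:-1,1:] ^ b)) X Y = (X + smult 1 Y) * hom (a+b) ([:1,1:] ^ a * [:-1,1:] ^ b) X Y"
    by (rule hom_lin)
  then show ?case using Suc.IH by (simp only: power_Suc mult.assoc add_Suc smult_1_left)
qed

definition EE :: "nat \<Rightarrow> nat \<Rightarrow> real poly" where "EE A B = [:1,1:] ^ A * [:-1,1:] ^ B"
definition ee :: "nat \<Rightarrow> nat \<Rightarrow> nat \<Rightarrow> real" where "ee A B k = coeff (EE A B) k"
definition ep :: "nat \<Rightarrow> nat \<Rightarrow> nat \<Rightarrow> real" where "ep n B k = coeff ([:1,1:] ^ k * [:1,-1:] ^ (n - k)) B"
definition Qf :: "nat \<Rightarrow> nat \<Rightarrow> real \<Rightarrow> real" where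
  "Qf A B w = (\<Sum>s\<le>B. real (A choose s) * real (B choose s) * (w - 1) ^ (2 * s) * (w + 1) ^ (A + B - 2 * s))"

lemma L1:
  assumes "B \<le> A"
  shows "Qf A B w = (\<Sum>k\<le>A+B. ee A B k * ep (A+B) B k * w ^ k)"
proof -
  let ?n = "A + B"
  have "(\<Sum>k\<le>?n. ee A B k * ep ?n B k * w ^ k) = coeff (\<Sum>k\<le>?n. smult (ee A B k) ([:w,w:] ^ k * [:1,-1:] ^ (?n - k))) B"
  proof -
    have "[:w,w:] ^ k = smult (w ^ k) ([:1,1:] ^ k)" for k
    proof -
      have "[:w,w:] = smult w [:1,1:]" by simp
      then have "[:w,w:] ^ k = (smult w [:1,1:]) ^ k" by (rule arg_cong)
      then show ?thesis by (simp only: smult_power)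
    qed
    then show ?thesis unfolding coeff_sum ep_def by (simp add: mult_ac)
  qed
  also have "(\<Sum>k\<le>?n. smult (ee A B k) ([:w,w:] ^ k * [:1,-1:] ^ (?n - k))) = hom ?n (EE A B) [:w,w:] [:1,-1:]"
    unfolding hom_def ee_def ..
  also have "\<dots> = [:w+1, w-1:] ^ A * [:w-1, w+1:] ^ B"
    unfolding EE_def hom_pow by simp
  also have "coeff \<dots> B = (\<Sum>i\<le>B. coeff ([:w+1, w-1:] ^ A) i * coeff ([:w-1, w+1:] ^ B) (B - i))"
    by (rule coeff_mult)
  also have "\<dots> = Qf A B w"
    unfolding Qf_def
  proof (rule sum.cong[OF refl])
    fix i assume "i \<in> {..B}"
    then have i: "i \<le> B" by simp
    have c: "B choose (B - i) = B choose i" using i by (rule binomial_symmetric[symmetric])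
    have e1: "(w - 1) ^ i * (w - 1) ^ (B - (B - i)) = (w - 1) ^ (2 * i)" using i by (simp add: power_add[symmetric] mult_2)
    have e2: "(w + 1) ^ (A - i) * (w + 1) ^ (B - i) = (w + 1) ^ (A + B - 2 * i)"
    proof -
      have "A - i + (B - i) = A + B - 2 * i" using i assms by simp
      then show ?thesis by (simp only: power_add[symmetric])
    qed
    show "coeff ([:w+1, w-1:] ^ A) i * coeff ([:w-1, w+1:] ^ B) (B - i) =
        real (A choose i) * real (B choose i) * (w - 1) ^ (2 * i) * (w + 1) ^ (A + B - 2 * i)"
    proof -
      have "coeff ([:w+1, w-1:] ^ A) i * coeff ([:w-1, w+1:] ^ B) (B - i) = real (A choose i) * real (B choose i) * ((w - 1) ^ i * (w - 1) ^ (B - (B - i))) * ((w + 1) ^ (A - i) * (w + 1) ^ (B - i))"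
        unfolding coeff_lin_pow c by (simp only: mult_ac)
      then show ?thesis by (simp only: e1 e2)
    qed
  qed
  finally show ?thesis ..
qed

lemma Qf_recip:
  assumes "B \<le> A" "w \<noteq> 0"
  shows "w ^ (A + B) * Qf A B (1 / w) = Qf A B w"
  unfolding Qf_def sum_distrib_left
proof (rule sum.cong[OF refl])
  fix s assume "s \<in> {..B}"
  then have s: "2 * s \<le> A + B" using assms by simp
  have p: "w ^ (A + B) = w ^ (2 * s) * w ^ (A + B - 2 * s)" using s by (simp add: power_add[symmetric])
  have a: "w ^ (2 * s) * (1 / w - 1) ^ (2 * s) = (w - 1) ^ (2 * s)"
  proof -
    have "w ^ (2 * s) * (1 / w - 1) ^ (2 * s) = (w * (1 / w - 1)) ^ (2 * s)" by (simp add: power_mult_distrib)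
    also have "w * (1 / w - 1) = - (w - 1)" using assms by (simp add: field_simps)
    also have "(- (w - 1)) ^ (2 * s) = (w - 1) ^ (2 * s)" by (simp only: power_mult power2_minus)
    finally show ?thesis .
  qed
  have b: "w ^ (A + B - 2 * s) * (1 / w + 1) ^ (A + B - 2 * s) = (w + 1) ^ (A + B - 2 * s)"
  proof -
    have "w ^ (A + B - 2 * s) * (1 / w + 1) ^ (A + B - 2 * s) = (w * (1 / w + 1)) ^ (A + B - 2 * s)" by (simp add: power_mult_distrib)
    also have "w * (1 / w + 1) = w + 1" using assms by (simp add: field_simps)
    finally show ?thesis .
  qed
  show "w ^ (A + B) * (real (A choose s) * real (B choose s) * (1 / w - 1) ^ (2 * s) * (1 / w + 1) ^ (A + B - 2 * s)) =
        real (A choose s) * real (B choose s) * (w - 1) ^ (2 * s) * (w + 1) ^ (A + B - 2 * s)"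
    unfolding p using a b by (simp add: mult_ac)
qed

lemma L2:
  assumes "B \<le> A" "w \<noteq> 0"
  shows "Qf A B w = (\<Sum>k\<le>A+B. ee A B k * ep (A+B) B k * w ^ (A + B - k))"
proof -
  have "Qf A B w = w ^ (A + B) * (\<Sum>k\<le>A+B. ee A B k * ep (A+B) B k * (1/w) ^ k)"
    using Qf_recip[OF assms] L1[OF assms(1), of "1/w"] by simp
  also have "\<dots> = (\<Sum>k\<le>A+B. ee A B k * ep (A+B) B k * w ^ (A + B - k))"
    unfolding sum_distrib_left
  proof (rule sum.cong[OF refl])
    fix k assume "k \<in> {..A+B}"
    then have "w ^ (A + B) = w ^ k * w ^ (A + B - k)" by (simp add: power_add[symmetric])
    then show "w ^ (A + B) * (ee A B k * ep (A + B) B k * (1 / w) ^ k) = ee A B k * ep (A + B) B k * w ^ (A + B - k)"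
      using assms(2) by (simp add: field_simps power_one_over)
  qed
  finally show ?thesis .
qed

lemma trinom:
  assumes "i \<le> k" "i \<le> B" "k \<le> n" "B \<le> n"
  shows "(n choose k) * (k choose i) * ((n - k) choose (B - i)) = (n choose B) * (B choose i) * ((n - B) choose (k - i))"
proof -
  have 1: "(n choose k) * (k choose i) = (n choose i) * ((n - i) choose (k - i))"
    using choose_mult[of i k n] assms by simp
  have 2: "(n choose B) * (B choose i) = (n choose i) * ((n - i) choose (B - i))"
    using choose_mult[of i B n] assms by simp
  define N where "N = n - i"
  define a where "a = k - i"
  define b where "b = B - i"
  have nk: "n - k = N - a" and nB: "n - B = N - b" using assms unfolding N_def a_def b_def by auto
  have 3: "(N choose a) * ((N - a) choose b) = (N choose b) * ((N - b) choose a)"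
  proof (cases "a + b \<le> N")
    case True
    have x: "(N choose (a + b)) * ((a + b) choose a) = (N choose a) * ((N - a) choose b)"
      using choose_mult[of a "a+b" N] True by simp
    have y: "(N choose (a + b)) * ((a + b) choose b) = (N choose b) * ((N - b) choose a)"
      using choose_mult[of b "a+b" N] True by simp
    have "(a + b) choose a = (a + b) choose b" using binomial_symmetric[of a "a+b"] by simp
    then show ?thesis using x y by simp
  next
    case False
    have l: "(N choose a) * ((N - a) choose b) = 0"
    proof (cases "a \<le> N")
      case True then have "N - a < b" using False by arith
      then show ?thesis by simp
    qed simp
    have r: "(N choose b) * ((N - b) choose a) = 0"
    proof (cases "b \<le> N")
      case True then have "N - b < a" using False by arith
      then show ?thesis by simp
    qed simp
    show ?thesis unfolding l r by (rule refl)
  qed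
  have "(n choose k) * (k choose i) * ((n - k) choose (B - i)) = (n choose i) * ((N choose a) * ((N - a) choose b))"
    unfolding 1 nk N_def a_def b_def by simp
  also have "\<dots> = (n choose i) * ((N choose b) * ((N - b) choose a))" unfolding 3 ..
  also have "\<dots> = (n choose B) * (B choose i) * ((n - B) choose (k - i))"
    unfolding 2 nB N_def a_def b_def by simp
  finally show ?thesis .
qed

lemma ee_sum: "ee A B k = (\<Sum>i\<le>k. real (B choose i) * (-1) ^ (B - i) * real (A choose (k - i)))"
proof -
  have e: "EE A B = [:-1,1:] ^ B * [:1,1:] ^ A" unfolding EE_def by (simp add: mult.commute)
  show ?thesis unfolding ee_def e coeff_mult coeff_lin_pow by (simp add: mult_ac)
qed

lemma ep_sum: "ep n B k = (\<Sum>i\<le>B. real (k choose i) * real ((n - k) choose (B - i)) * (-1) ^ (B - i))"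
  unfolding ep_def coeff_mult coeff_lin_pow by (simp add: mult_ac)

lemma duality:
  assumes "k \<le> n" "B \<le> n"
  shows "real (n choose k) * ep n B k = real (n choose B) * ee (n - B) B k"
proof -
  define S where "S = {i. i \<le> k \<and> i \<le> B}"
  have fS: "finite S" unfolding S_def by simp
  have "real (n choose k) * ep n B k = (\<Sum>i\<le>B. real (n choose k) * (real (k choose i) * real ((n - k) choose (B - i)) * (-1) ^ (B - i)))"
    unfolding ep_sum sum_distrib_left ..
  also have "\<dots> = (\<Sum>i\<in>S. real (n choose k) * (real (k choose i) * real ((n - k) choose (B - i)) * (-1) ^ (B - i)))"
    by (rule sum.mono_neutral_right) (auto simp: S_def)
  also have "\<dots> = (\<Sum>i\<in>S. real (n choose B) * (real (B choose i) * (-1) ^ (B - i) * real ((n - B) choose (k - i))))"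
  proof (rule sum.cong[OF refl])
    fix i assume "i \<in> S"
    then have i: "i \<le> k" "i \<le> B" unfolding S_def by auto
    have "real ((n choose k) * (k choose i) * ((n - k) choose (B - i))) = real ((n choose B) * (B choose i) * ((n - B) choose (k - i)))"
      using trinom[OF i assms] by simp
    then show "real (n choose k) * (real (k choose i) * real ((n - k) choose (B - i)) * (-1) ^ (B - i)) =
        real (n choose B) * (real (B choose i) * (-1) ^ (B - i) * real ((n - B) choose (k - i)))"
      by (simp only: of_nat_mult) (simp add: mult_ac)
  qed
  also have "\<dots> = (\<Sum>i\<le>k. real (n choose B) * (real (B choose i) * (-1) ^ (B - i) * real ((n - B) choose (k - i))))"
    by (rule sum.mono_neutral_left) (auto simp: S_def)
  also have "\<dots> = real (n choose B) * ee (n - B) B k"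
    unfolding ee_sum sum_distrib_left ..
  finally show ?thesis .
qed

lemma ee_ep_nonneg:
  assumes "k \<le> A + B"
  shows "ee A B k * ep (A+B) B k \<ge> 0"
proof -
  have d: "real ((A+B) choose k) * ep (A+B) B k = real ((A+B) choose B) * ee A B k"
    using duality[OF assms, of B] by simp
  have pos: "real ((A+B) choose k) > 0" using assms by simp
  have "real ((A+B) choose k) * (ee A B k * ep (A+B) B k) = real ((A+B) choose B) * (ee A B k)^2"
    using d by (simp add: power2_eq_square mult_ac)
  also have "\<dots> \<ge> 0" by simp
  finally show ?thesis using pos by (simp add: zero_le_mult_iff)
qed

lemma ee_0: "ee A B 0 = (-1) ^ B"
  unfolding ee_def EE_def by (simp add: poly_0_coeff_0[symmetric])

lemma ee_top: "ee A B (A + B) = 1"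
proof -
  have nz1: "[:1,1::real:] ^ A \<noteq> 0" and nz2: "[:-1,1::real:] ^ B \<noteq> 0" by simp_all
  have "degree (EE A B) = A + B" unfolding EE_def
    by (simp add: degree_mult_eq[OF nz1 nz2] degree_power_eq)
  moreover have "lead_coeff (EE A B) = 1" unfolding EE_def by (simp add: lead_coeff_mult lead_coeff_power)
  ultimately show ?thesis unfolding ee_def by simp
qed

lemma ends_sum:
  assumes "B \<le> A"
  shows "ee A B 0 * ep (A+B) B 0 + ee A B (A+B) * ep (A+B) B (A+B) = 2 * real ((A+B) choose B)"
proof -
  have d0: "ep (A+B) B 0 = real ((A+B) choose B) * ee A B 0"
    using duality[of 0 "A+B" B] by simp
  have dn: "ep (A+B) B (A+B) = real ((A+B) choose B) * ee A B (A+B)"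
    using duality[of "A+B" "A+B" B] by simp
  show ?thesis unfolding d0 dn ee_0 ee_top by (simp add: power2_eq_square[symmetric] power_mult[symmetric])
qed



definition jidx :: "nat \<Rightarrow> nat \<Rightarrow> nat" where
  "jidx n k = (if n \<le> 2 * k then 2 * k - n else n - 2 * k)"
definition cc :: "nat \<Rightarrow> nat \<Rightarrow> nat \<Rightarrow> real" where
  "cc A B k = ee A B k * ep (A+B) B k / 2 ^ (A+B)"
definition SP :: "nat \<Rightarrow> nat \<Rightarrow> real poly" where
  "SP A B = (\<Sum>k\<le>A+B. smult (cc A B k) (Tc (jidx (A+B) k)))"
definition ZP :: "nat \<Rightarrow> nat \<Rightarrow> real poly" where
  "ZP M p = (\<Sum>s\<le>p. smult (real (p choose s) * real ((p+M) choose s)) ([:-1,0,1:] ^ s * [:0,0,1:] ^ (p - s) * [:0,1:] ^ M))"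

lemma poly_ZP: "poly (ZP M p) r = (\<Sum>s\<le>p. real (p choose s) * real ((p+M) choose s) * (r^2 - 1) ^ s * (r^2) ^ (p - s) * r ^ M)"
proof -
  have a: "poly [:-1,0,1:] r = r^2 - 1" by (simp add: power2_eq_square)
  have b: "poly [:0,0,1:] r = r^2" by (simp add: power2_eq_square)
  show ?thesis unfolding ZP_def poly_sum poly_smult poly_mult poly_power a b by (simp add: mult_ac)
qed

lemma zernike_ZP:
  "zernikeR n m r = poly (ZP (nat \<bar>m\<bar>) (nat ((int n - \<bar>m\<bar>) div 2))) r"
proof -
  define M where "M = nat \<bar>m\<bar>"
  define p where "p = nat ((int n - \<bar>m\<bar>) div 2)"
  have "zernikeR n m r = r ^ M * jacobiP p 0 (real M) (2 * r\<^sup>2 - 1)"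
    unfolding zernikeR_def M_def p_def ..
  also have "\<dots> = (\<Sum>s\<le>p. real (p choose s) * real ((p+M) choose s) * (r^2 - 1) ^ s * (r^2) ^ (p - s) * r ^ M)"
    unfolding jacobiP_def sum_distrib_left
  proof (rule sum.cong[OF refl])
    fix s assume "s \<in> {..p}"
    then have s: "s \<le> p" by simp
    have g1: "(real p + 0) gchoose (p - s) = real (p choose s)"
      using s by (simp add: binomial_gbinomial[symmetric] binomial_symmetric[symmetric])
    have g2: "(real p + real M) gchoose s = real ((p+M) choose s)"
      using binomial_gbinomial[of "p+M" s] unfolding of_nat_add by (rule sym)
    have x1: "(2 * r\<^sup>2 - 1 - 1) / 2 = r^2 - 1" by simp
    have x2: "(2 * r\<^sup>2 - 1 + 1) / 2 = r^2" by simp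
    show "(r::real) ^ M * (((real p + 0) gchoose (p - s)) * ((real p + real M) gchoose s) * (((2::real) * r\<^sup>2 - 1 - 1) / 2) ^ s * (((2::real) * r\<^sup>2 - 1 + 1) / 2) ^ (p - s)) =
          real (p choose s) * real ((p+M) choose s) * (r^2 - 1) ^ s * (r^2) ^ (p - s) * r ^ M"
      unfolding g1 g2 x1 x2 by (simp add: mult_ac)
  qed
  also have "\<dots> = poly (ZP M p) r" unfolding poly_ZP ..
  finally show ?thesis unfolding M_def p_def .
qed

lemma Tc_jouk: "z \<noteq> 0 \<Longrightarrow> poly (Tc j) ((z + 1/z)/2) = (z ^ j + (1/z) ^ j) / 2 \<and> poly (Tc (Suc j)) ((z + 1/z)/2) = (z ^ Suc j + (1/z) ^ Suc j) / 2"
proof (induction j)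
  case 0 then show ?case by simp
next
  case (Suc j)
  have h0: "poly (Tc j) ((z + 1/z)/2) = (z ^ j + (1/z) ^ j) / 2" using Suc by blast
  have h1: "poly (Tc (Suc j)) ((z + 1/z)/2) = (z ^ Suc j + (1/z) ^ Suc j) / 2" using Suc by blast
  have h2: "poly (Tc (Suc (Suc j))) ((z + 1/z)/2) = (z ^ Suc (Suc j) + (1/z) ^ Suc (Suc j)) / 2"
    unfolding Trec h0 h1 using Suc.prems by (simp add: field_simps)
  show ?case by (rule conjI[OF h1 h2])
qed

lemma ZP_val:
  assumes "z > 0"
  shows "(2 * z) ^ (M + 2 * p) * poly (ZP M p) ((z + 1/z)/2) = Qf (p + M) p (z^2)"
proof -
  define r where "r = (z + 1/z)/2"
  define w where "w = z^2"
  have zr: "2 * z * r = w + 1" unfolding r_def w_def using assms by (simp add: field_simps power2_eq_square)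
  have zr2: "(2 * z)^2 * r^2 = (w + 1)^2"
  proof -
    have "(2 * z)^2 * r^2 = (2 * z * r)^2" by (simp only: power_mult_distrib)
    then show ?thesis unfolding zr .
  qed
  have zr3: "(2 * z)^2 * (r^2 - 1) = (w - 1)^2"
  proof -
    have "(2 * z)^2 * (r^2 - 1) = (w + 1)^2 - 4 * w" using zr2 unfolding w_def by (simp add: algebra_simps power2_eq_square)
    then show ?thesis by (simp add: algebra_simps power2_eq_square)
  qed
  have "(2 * z) ^ (M + 2 * p) * poly (ZP M p) r = (\<Sum>s\<le>p. real (p choose s) * real ((p+M) choose s) * (w - 1) ^ (2 * s) * (w + 1) ^ (p + M + p - 2 * s))"
    unfolding poly_ZP sum_distrib_left
  proof (rule sum.cong[OF refl])
    fix s assume "s \<in> {..p}"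
    then have s: "s \<le> p" by simp
    have e: "(2 * z) ^ (M + 2 * p) = ((2 * z)^2) ^ s * ((2 * z)^2) ^ (p - s) * (2 * z) ^ M"
    proof -
      have "M + 2 * p = 2 * s + 2 * (p - s) + M" using s by simp
      then show ?thesis by (simp only: power_add power_mult)
    qed
    have f: "(w - 1) ^ (2 * s) * (w + 1) ^ (p + M + p - 2 * s) = ((w - 1)^2) ^ s * ((w + 1)^2) ^ (p - s) * (w + 1) ^ M"
    proof -
      have "p + M + p - 2 * s = 2 * (p - s) + M" using s by simp
      then show ?thesis by (simp only: power_add power_mult)
    qed
    have "(2 * z) ^ (M + 2 * p) * (real (p choose s) * real ((p+M) choose s) * (r^2 - 1) ^ s * (r^2) ^ (p - s) * r ^ M)
      = real (p choose s) * real ((p+M) choose s) * ((2 * z)^2 * (r^2 - 1)) ^ s * ((2 * z)^2 * r^2) ^ (p - s) * (2 * z * r) ^ M"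
      unfolding e by (simp add: power_mult_distrib mult_ac)
    also have "\<dots> = real (p choose s) * real ((p+M) choose s) * (((w - 1)^2) ^ s * ((w + 1)^2) ^ (p - s) * (w + 1) ^ M)"
      unfolding zr zr2 zr3 by (simp only: mult.assoc)
    also have "\<dots> = real (p choose s) * real ((p+M) choose s) * (w - 1) ^ (2 * s) * (w + 1) ^ (p + M + p - 2 * s)"
      unfolding f[symmetric] by (simp only: mult.assoc)
    finally show "(2 * z) ^ (M + 2 * p) * (real (p choose s) * real ((p+M) choose s) * (r^2 - 1) ^ s * (r^2) ^ (p - s) * r ^ M)
      = real (p choose s) * real ((p+M) choose s) * (w - 1) ^ (2 * s) * (w + 1) ^ (p + M + p - 2 * s)" .
  qed
  also have "\<dots> = Qf (p + M) p w" unfolding Qf_def by (simp add: mult_ac)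
  finally show ?thesis unfolding r_def w_def .
qed

lemma zz:
  fixes z :: real
  assumes "k \<le> n" "z \<noteq> 0"
  shows "z ^ n * (z ^ jidx n k + (1/z) ^ jidx n k) = (z^2) ^ k + (z^2) ^ (n - k)"
proof (cases "n \<le> 2 * k")
  case True
  then have j: "jidx n k = 2 * k - n" unfolding jidx_def by simp
  have a: "z ^ n * z ^ (2 * k - n) = (z^2) ^ k"
  proof -
    have "n + (2 * k - n) = 2 * k" using True by simp
    then show ?thesis by (simp only: power_add[symmetric] power_mult)
  qed
  have b: "z ^ n * (1/z) ^ (2 * k - n) = (z^2) ^ (n - k)"
  proof -
    have "n = (2 * k - n) + 2 * (n - k)" using True assms(1) by simp
    then have e1: "z ^ n = z ^ (2 * k - n) * z ^ (2 * (n - k))"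
      by (metis power_add)
    have e2: "z ^ (2 * k - n) * (1/z) ^ (2 * k - n) = 1"
    proof -
      have "z * (1/z) = 1" using assms(2) by simp
      then have "(z * (1/z)) ^ (2 * k - n) = 1" by simp
      then show ?thesis by (simp only: power_mult_distrib)
    qed
    have "z ^ n * (1/z) ^ (2 * k - n) = z ^ (2 * (n - k)) * (z ^ (2 * k - n) * (1/z) ^ (2 * k - n))"
      unfolding e1 by (simp only: mult_ac)
    then have "z ^ n * (1/z) ^ (2 * k - n) = z ^ (2 * (n - k))" unfolding e2 by simp
    then show ?thesis by (simp only: power_mult)
  qed
  show ?thesis unfolding j distrib_left a b by simp
next
  case False
  then have j: "jidx n k = n - 2 * k" unfolding jidx_def by simp
  have a: "z ^ n * z ^ (n - 2 * k) = (z^2) ^ (n - k)"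
  proof -
    have "n + (n - 2 * k) = 2 * (n - k)" using False by simp
    then show ?thesis by (simp only: power_add[symmetric] power_mult)
  qed
  have b: "z ^ n * (1/z) ^ (n - 2 * k) = (z^2) ^ k"
  proof -
    have "n = (n - 2 * k) + 2 * k" using False by simp
    then have e1: "z ^ n = z ^ (n - 2 * k) * z ^ (2 * k)"
      by (metis power_add)
    have e2: "z ^ (n - 2 * k) * (1/z) ^ (n - 2 * k) = 1"
    proof -
      have "z * (1/z) = 1" using assms(2) by simp
      then have "(z * (1/z)) ^ (n - 2 * k) = 1" by simp
      then show ?thesis by (simp only: power_mult_distrib)
    qed
    have "z ^ n * (1/z) ^ (n - 2 * k) = z ^ (2 * k) * (z ^ (n - 2 * k) * (1/z) ^ (n - 2 * k))"
      unfolding e1 by (simp only: mult_ac)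
    then have "z ^ n * (1/z) ^ (n - 2 * k) = z ^ (2 * k)" unfolding e2 by simp
    then show ?thesis by (simp only: power_mult)
  qed
  show ?thesis unfolding j distrib_left a b by simp
qed

lemma SP_val:
  assumes "z > 0" "B \<le> A"
  shows "(2 * z) ^ (A + B) * poly (SP A B) ((z + 1/z)/2) = Qf A B (z^2)"
proof -
  define n where "n = A + B"
  define w where "w = z^2"
  have wnz: "w \<noteq> 0" unfolding w_def using assms by simp
  have "(2 * z) ^ n * poly (SP A B) ((z + 1/z)/2) = (\<Sum>k\<le>n. ee A B k * ep n B k * (w ^ k + w ^ (n - k)) / 2)"
    unfolding SP_def poly_sum sum_distrib_left n_def[symmetric]
  proof (rule sum.cong[OF refl])
    fix k assume "k \<in> {..n}"
    then have k: "k \<le> n" by simp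
    have "(2 * z) ^ n * poly (smult (cc A B k) (Tc (jidx n k))) ((z + 1 / z) / 2)
        = ee A B k * ep n B k * (z ^ n * (z ^ jidx n k + (1/z) ^ jidx n k)) / 2"
      unfolding poly_smult Tc_jouk[of z "jidx n k", THEN conjunct1, OF order.strict_implies_not_eq[OF assms(1), symmetric]] cc_def n_def[symmetric]
      by (simp add: power_mult_distrib field_simps)
    also have "\<dots> = ee A B k * ep n B k * (w ^ k + w ^ (n - k)) / 2"
      using zz[OF k, of z] assms(1) unfolding w_def by simp
    finally show "(2 * z) ^ n * poly (smult (cc A B k) (Tc (jidx n k))) ((z + 1 / z) / 2) = ee A B k * ep n B k * (w ^ k + w ^ (n - k)) / 2" .
  qed
  also have "\<dots> = ((\<Sum>k\<le>n. ee A B k * ep n B k * w ^ k) + (\<Sum>k\<le>n. ee A B k * ep n B k * w ^ (n - k))) / 2"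
    by (simp add: sum.distrib sum_divide_distrib[symmetric] algebra_simps)
  also have "\<dots> = (Qf A B w + Qf A B w) / 2"
    unfolding n_def L1[OF assms(2), of w, symmetric] L2[OF assms(2) wnz, symmetric] ..
  finally show ?thesis unfolding n_def w_def by simp
qed



lemma poly_eq_on_ge1:
  fixes P Q :: "real poly"
  assumes "\<And>r. r \<ge> 1 \<Longrightarrow> poly P r = poly Q r"
  shows "P = Q"
proof (rule ccontr)
  assume "P \<noteq> Q"
  then have "P - Q \<noteq> 0" by simp
  then have fin: "finite {x. poly (P - Q) x = 0}" by (rule poly_roots_finite)
  have "{1::real..} \<subseteq> {x. poly (P - Q) x = 0}" using assms by auto
  then have "finite {1::real..}" using fin by (rule finite_subset)
  then show False using infinite_Ici[of "1::real"] by simp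
qed

lemma ZP_SP: "ZP M p = SP (p + M) p"
proof (rule poly_eq_on_ge1)
  fix r :: real assume r: "r \<ge> 1"
  define s where "s = sqrt (r^2 - 1)"
  define z where "z = r + s"
  have "1 * 1 \<le> r * r" using r by (intro mult_mono) auto
  then have r2: "1 \<le> r^2" by (simp add: power2_eq_square)
  then have s0: "s \<ge> 0" unfolding s_def by simp
  from r2 have s2: "s^2 = r^2 - 1" unfolding s_def by simp
  have zpos: "z > 0" unfolding z_def using r s0 by simp
  have "z * (r - s) = 1" unfolding z_def using s2 by (simp add: algebra_simps power2_eq_square)
  then have iz: "1 / z = r - s" using zpos by (simp add: field_simps)
  have rz: "(z + 1/z) / 2 = r" by (simp only: iz) (simp add: z_def)
  have n: "M + 2 * p = p + M + p" by simp
  have "(2 * z) ^ (M + 2 * p) * poly (ZP M p) r = (2 * z) ^ (M + 2 * p) * poly (SP (p + M) p) r"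
    using ZP_val[OF zpos, of M p] SP_val[OF zpos, of p "p + M"] unfolding rz n by simp
  moreover have "(2 * z) ^ (M + 2 * p) \<noteq> 0" using zpos by simp
  ultimately show "poly (ZP M p) r = poly (SP (p + M) p) r" using zpos by simp
qed

lemma deriv_poly_funpow: "(deriv ^^ k) (poly P) = poly ((pderiv ^^ k) P)"
proof (induction k)
  case 0 then show ?case by simp
next
  case (Suc k)
  have "(deriv ^^ Suc k) (poly P) = deriv (poly ((pderiv ^^ k) P))" using Suc by simp
  also have "\<dots> = poly (pderiv ((pderiv ^^ k) P))"
  proof (rule ext)
    fix x show "deriv (poly ((pderiv ^^ k) P)) x = poly (pderiv ((pderiv ^^ k) P)) x"
      by (rule DERIV_imp_deriv) (rule poly_DERIV)
  qed
  finally show ?case by simp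
qed

theorem mainTheorem2:
  fixes n k :: nat and m :: int
  assumes "n \<ge> 1" and "\<bar>m\<bar> \<le> int n" and "even (int n - \<bar>m\<bar>)" and "k \<ge> 1"
  shows "(\<forall>r\<in>{0..1::real}. \<bar>(deriv ^^ k) (zernikeR n m) r\<bar> \<le> \<bar>(deriv ^^ k) (zernikeR n m) 1\<bar>)
         \<and> a_const n m * B_const n k \<le> (deriv ^^ k) (zernikeR n m) 1
         \<and> (deriv ^^ k) (zernikeR n m) 1 \<le> B_const n k"
proof -
  define M where "M = nat \<bar>m\<bar>"
  define p where "p = nat ((int n - \<bar>m\<bar>) div 2)"
  define A where "A = p + M"
  define B where "B = p"
  have ev: "2 * ((int n - \<bar>m\<bar>) div 2) = int n - \<bar>m\<bar>" using assms(3) by simp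
  have nMp: "n = M + 2 * p" unfolding M_def p_def using ev assms(2) by linarith
  have nAB: "A + B = n" unfolding A_def B_def nMp by simp
  have BA: "B \<le> A" unfolding A_def B_def by simp
  define S where "S = SP A B"
  define D where "D = (pderiv ^^ k) S"
  have zS: "zernikeR n m = poly S"
  proof (rule ext)
    fix r show "zernikeR n m r = poly S r"
      unfolding zernike_ZP S_def A_def B_def ZP_SP[symmetric] M_def[symmetric] p_def[symmetric] ..
  qed
  have dz: "(deriv ^^ k) (zernikeR n m) = poly D" unfolding zS D_def deriv_poly_funpow ..
  have cc_nonneg: "cc A B i \<ge> 0" if "i \<le> n" for i
    unfolding cc_def using ee_ep_nonneg[of i A B] that nAB by simp
  have coneS: "ccone S" unfolding S_def SP_def
    using cc_nonneg nAB by (intro cone_sum cone_smult cone_T) auto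
  have coneD: "ccone D" unfolding D_def by (rule cone_hpderiv[OF coneS])
  define tv where "tv j = poly ((pderiv ^^ k) (Tc j)) 1" for j
  have val: "poly D 1 = (\<Sum>i\<le>n. cc A B i * tv (jidx n i))"
    unfolding D_def S_def SP_def higher_pderiv_sum higher_pderiv_smult poly_sum poly_smult tv_def nAB ..
  have tv_le: "tv (jidx n i) \<le> tv n" if "i \<le> n" for i
  proof (cases "n \<le> 2 * i")
    case True
    then have "n = jidx n i + 2 * (n - i)" unfolding jidx_def using that by simp
    then show ?thesis unfolding tv_def using tval_mono[OF assms(4), of "jidx n i" "n - i"] by simp
  next
    case False
    then have "n = jidx n i + 2 * i" unfolding jidx_def by simp
    then show ?thesis unfolding tv_def using tval_mono[OF assms(4), of "jidx n i" i] by simp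
  qed
  have tv_nonneg: "tv j \<ge> 0" for j unfolding tv_def by (rule cone_nonneg1[OF cone_hpderiv[OF cone_T]])
  have tvn: "tv n = B_const n k" unfolding tv_def tval_formula B_const_formula ..
  have sum1: "(\<Sum>i\<le>n. cc A B i) = 1"
  proof -
    have "poly S 1 = (\<Sum>i\<le>n. cc A B i)" unfolding S_def SP_def poly_sum poly_smult Tc_one nAB by simp
    moreover have "poly S 1 = 1"
    proof -
      have "poly S 1 = poly (ZP M p) 1" unfolding S_def A_def B_def ZP_SP ..
      also have "\<dots> = (\<Sum>s\<le>p. if s = 0 then 1 else 0)"
        unfolding poly_ZP by (rule sum.cong[OF refl]) (simp add: power_0_left)
      also have "\<dots> = 1" by simp
      finally show ?thesis .
    qed
    ultimately show ?thesis by simp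
  qed
  have upper: "poly D 1 \<le> B_const n k"
  proof -
    have "poly D 1 \<le> (\<Sum>i\<le>n. cc A B i * tv n)"
      unfolding val by (rule sum_mono) (use cc_nonneg tv_le in \<open>auto intro: mult_left_mono\<close>)
    also have "\<dots> = tv n" unfolding sum_distrib_right[symmetric] sum1 by simp
    finally show ?thesis unfolding tvn .
  qed
  have lower: "a_const n m * B_const n k \<le> poly D 1"
  proof -
    have j0: "jidx n 0 = n" unfolding jidx_def using assms(1) by simp
    have jn: "jidx n n = n" unfolding jidx_def by simp
    have "(\<Sum>i\<in>{0,n}. cc A B i * tv (jidx n i)) \<le> (\<Sum>i\<le>n. cc A B i * tv (jidx n i))"
      by (rule sum_mono2) (use cc_nonneg tv_nonneg in auto)
    moreover have "(\<Sum>i\<in>{0,n}. cc A B i * tv (jidx n i)) = (cc A B 0 + cc A B n) * tv n"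
      using assms(1) j0 jn by (simp add: algebra_simps)
    moreover have "cc A B 0 + cc A B n = a_const n m"
    proof -
      have "cc A B 0 + cc A B n = (ee A B 0 * ep (A+B) B 0 + ee A B (A+B) * ep (A+B) B (A+B)) / 2 ^ (A+B)"
        unfolding cc_def by (simp add: add_divide_distrib nAB)
      also have "\<dots> = 2 * real ((A+B) choose B) / 2 ^ (A+B)" unfolding ends_sum[OF BA] ..
      also have "\<dots> = 2 * real (n choose p) / 2 ^ n" by (simp only: nAB) (simp add: B_def)
      also have "\<dots> = a_const n m" unfolding a_const_def p_def by (simp add: power_one_over)
      finally show ?thesis .
    qed
    ultimately show ?thesis unfolding val tvn by simp
  qed
  have conj1: "\<forall>r\<in>{0..1::real}. \<bar>poly D r\<bar> \<le> \<bar>poly D 1\<bar>"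
  proof
    fix r :: real assume "r \<in> {0..1}"
    then have "\<bar>r\<bar> \<le> 1" by simp
    then have "\<bar>poly D r\<bar> \<le> poly D 1" by (rule cone_bound[OF coneD])
    then show "\<bar>poly D r\<bar> \<le> \<bar>poly D 1\<bar>" by simp
  qed
  show ?thesis unfolding dz using conj1 upper lower by blast
qed

end
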